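(* Let $\epsilon_1>0$ and $\epsilon_2>0$. For all $r \in \mathbb{R}^3\setminus\{0\}$ and all $f_*\in\mathbb{R}^3$, $$\psi\Big(r, \frac{f_*}{\|r\|^4}\Big) > \|c_1(r,f_* )\|^2 = \big(2 - \operatorname{sgn}(r^{\mathrm T} f_* )^2\big)\,\|c_2(r,f_* )\|^2,$$ where $\psi$, $c_1$, $c_2$ are defined in the context below.
   Context: Notation: $\|\cdot\|$ is the Euclidean norm. For $a=(a_1,a_2,a_3)^{\mathrm T}\in\mathbb{R}^3$, $[a]_\times$ is the skew-symmetric matrix with rows $(0,-a_3,a_2)$, $(a_3,0,-a_1)$, $(-a_2,a_1,0)$, so $[a]_\times b = a\times b$. $\operatorname{sgn}:\mathbb{R}\to\{-1,0,1\}$ is the sign function with $\operatorname{sgn}(0)=0$. Auxiliary scalar: for $r,f_*\in\mathbb{R}^3$, $\Phi_1(r,f_* ) \triangleq \sqrt{\|[r]_\times f_*\|^2 + \|r\|^2\|f_*\|^2}$ and $\Phi_2(r,f_* ) \triangleq \big(2-\operatorname{sgn}(r^{\mathrm T} f_* )^2\big)\Phi_1(r,f_* )$. Function $\psi:\mathbb{R}^3\times\mathbb{R}^3\to\mathbb{R}$ (with the fixed constants $\epsilon_1,\epsilon_2>0$): $$\psi(r,\zeta) \triangleq -\frac{\|r\|^3\, r^{\mathrm T}\zeta}{4}\tanh\Big(\frac{\|r\|^3\, r^{\mathrm T}\zeta}{\epsilon_1}\Big) + \sqrt{\|r\|^6\,\Phi_1(r,\zeta)^2 + \epsilon_2}.$$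 Matrix $R(r,f_* )\in\mathbb{R}^{3\times3}$ (for $r\neq0$): if $[r]_\times f_*\neq0$, its three rows are (the transposes of) $\frac{r}{\|r\|}$, $\frac{(r^{\mathrm T} r) f_* - (r^{\mathrm T} f_* ) r}{\|r\|\,\|[r]_\times f_*\|}$, $\frac{[r]_\times f_*}{\|[r]_\times f_*\|}$; if $[r]_\times f_*=0$, its first row is $r^{\mathrm T}/\|r\|$ and its other two rows are zero. Scalars (evaluated at $(r,f_* )$, $r\ne 0$): $a_x \triangleq -\frac{\operatorname{sgn}(r^{\mathrm T} f_* )}{2}\big(\frac{|r^{\mathrm T} f_*|+\Phi_1}{\|r\|}\big)^{1/2}$, $a_y \triangleq \frac{1}{\sqrt2}\big(\frac{-|r^{\mathrm T} f_*|+\Phi_2}{\|r\|}\big)^{1/2}$, $b_x \triangleq \frac12\big(\frac{|r^{\mathrm T} f_*|+\Phi_2}{\|r\|}\big)^{1/2}$, $b_y \triangleq -\frac{\operatorname{sgn}(r^{\mathrm T} f_* )}{\sqrt2}\big(\frac{-|r^{\mathrm T} f_*|+\Phi_1}{\|r\|}\big)^{1/2}$. With $a(r,f_* )\triangleq(a_x,a_y,0)^{\mathrm T}$ and $b(r,f_* )\triangleq(b_x,b_y,0)^{\mathrm T}$, define $c_1(r,f_* )\triangleq R(r,f_* )^{\mathrm T} a(r,f_* )$ and $c_2(r,f_* )\triangleq R(r,f_* )^{\mathrm T} b(r,f_* )$. *)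

theory Defs
  imports "HOL-Analysis.Analysis"
begin

definition skew :: "real^3 \<Rightarrow> real^3^3" where
  "skew a = vector [vector [0, - a$3, a$2], vector [a$3, 0, - a$1], vector [- a$2, a$1, 0]]"

definition Phi1 :: "real^3 \<Rightarrow> real^3 \<Rightarrow> real" where
  "Phi1 r f = sqrt ((norm (skew r *v f))^2 + (norm r)^2 * (norm f)^2)"

definition Phi2 :: "real^3 \<Rightarrow> real^3 \<Rightarrow> real" where
  "Phi2 r f = (2 - (sgn (r \<bullet> f))^2) * Phi1 r f"

definition psi :: "real \<Rightarrow> real \<Rightarrow> real^3 \<Rightarrow> real^3 \<Rightarrow> real" where
  "psi eps1 eps2 r \<zeta> =
     - ((norm r)^3 * (r \<bullet> \<zeta>) / 4) * tanh ((norm r)^3 * (r \<bullet> \<zeta>) / eps1)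
     + sqrt ((norm r)^6 * (Phi1 r \<zeta>)^2 + eps2)"

definition Rmat :: "real^3 \<Rightarrow> real^3 \<Rightarrow> real^3^3" where
  "Rmat r f =
    (if skew r *v f \<noteq> 0 then
       vector [ (1 / norm r) *\<^sub>R r,
                (1 / (norm r * norm (skew r *v f))) *\<^sub>R ((r \<bullet> r) *\<^sub>R f - (r \<bullet> f) *\<^sub>R r),
                (1 / norm (skew r *v f)) *\<^sub>R (skew r *v f) ]
     else vector [ (1 / norm r) *\<^sub>R r, 0, 0 ])"

definition ax :: "real^3 \<Rightarrow> real^3 \<Rightarrow> real" where
  "ax r f = - (sgn (r \<bullet> f) / 2) * sqrt ((\<bar>r \<bullet> f\<bar> + Phi1 r f) / norm r)"

definition ay :: "real^3 \<Rightarrow> real^3 \<Rightarrow> real" where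
  "ay r f = (1 / sqrt 2) * sqrt ((- \<bar>r \<bullet> f\<bar> + Phi2 r f) / norm r)"

definition bx :: "real^3 \<Rightarrow> real^3 \<Rightarrow> real" where
  "bx r f = (1 / 2) * sqrt ((\<bar>r \<bullet> f\<bar> + Phi2 r f) / norm r)"

definition by' :: "real^3 \<Rightarrow> real^3 \<Rightarrow> real" where
  "by' r f = - (sgn (r \<bullet> f) / sqrt 2) * sqrt ((- \<bar>r \<bullet> f\<bar> + Phi1 r f) / norm r)"

definition avec :: "real^3 \<Rightarrow> real^3 \<Rightarrow> real^3" where
  "avec r f = vector [ax r f, ay r f, 0]"

definition bvec :: "real^3 \<Rightarrow> real^3 \<Rightarrow> real^3" where
  "bvec r f = vector [bx r f, by' r f, 0]"

definition c1 :: "real^3 \<Rightarrow> real^3 \<Rightarrow> real^3" where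
  "c1 r f = transpose (Rmat r f) *v avec r f"

definition c2 :: "real^3 \<Rightarrow> real^3 \<Rightarrow> real^3" where
  "c2 r f = transpose (Rmat r f) *v bvec r f"

end

theory Submission
  imports Defs
begin

lemma n3: "(norm (x::real^3))^2 = x$1^2 + x$2^2 + x$3^2"
  unfolding power2_norm_eq_inner by (simp add: inner_vec_def sum_3 power2_eq_square)

lemma i3: "inner (x::real^3) y = x$1*y$1 + x$2*y$2 + x$3*y$3"
  by (simp add: inner_vec_def sum_3)

lemma skew_comp: "(skew r *v f)$1 = - r$3*f$2 + r$2*f$3"
  "(skew r *v f)$2 = r$3*f$1 - r$1*f$3" "(skew r *v f)$3 = - r$2*f$1 + r$1*f$2"
  by (simp_all add: skew_def matrix_vector_mult_def sum_3)

lemma skew_norm: "(norm (skew r *v f))^2 = (norm r)^2 * (norm f)^2 - (r \<bullet> f)^2"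
  unfolding n3 i3 skew_comp by (simp add: algebra_simps power2_eq_square)

lemma Phi1_sq: "(Phi1 r f)^2 = 2 * (norm r)^2 * (norm f)^2 - (r \<bullet> f)^2"
proof -
  have "(r \<bullet> f)^2 \<le> (norm r)^2 * (norm f)^2"
    using Cauchy_Schwarz_ineq by (simp add: power2_norm_eq_inner)
  moreover have "0 \<le> (norm r)^2 * (norm f)^2" by simp
  ultimately have "0 \<le> 2 * (norm r)^2 * (norm f)^2 - (r \<bullet> f)^2" by linarith
  then show ?thesis unfolding Phi1_def using skew_norm[of r f] by (simp add: algebra_simps)
qed

lemma Phi1_ge: "\<bar>r \<bullet> f\<bar> \<le> Phi1 r f"
proof -
  have "(r \<bullet> f)^2 \<le> (norm r)^2 * (norm f)^2"
    using Cauchy_Schwarz_ineq by (simp add: power2_norm_eq_inner)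
  then have "\<bar>r \<bullet> f\<bar>^2 \<le> (Phi1 r f)^2" using Phi1_sq[of r f] by simp
  moreover have "Phi1 r f \<ge> 0" by (simp add: Phi1_def)
  ultimately show ?thesis using power2_le_imp_le by blast
qed

lemma tmv: "transpose (vector [u, v, w] :: real^3^3) *v (vector [a, b, c] :: real^3) = a *\<^sub>R u + b *\<^sub>R v + c *\<^sub>R w"
  by (simp add: vec_eq_iff forall_3 matrix_vector_mult_def transpose_def sum_3 mult.commute)

lemma norm2_comb: "(norm (a *\<^sub>R u + b *\<^sub>R v :: real^3))^2 = a^2 * (u \<bullet> u) + 2*a*b*(u \<bullet> v) + b^2 * (v \<bullet> v)"
  unfolding power2_norm_eq_inner
  by (simp add: inner_add_left inner_add_right inner_commute power2_eq_square algebra_simps)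

lemma sgn_sq_abs: "(sgn (x::real))^2 * \<bar>x\<bar> = \<bar>x\<bar>"
  by (cases "x = 0") (auto simp: sgn_real_def)

lemma norm_T:
  assumes "r \<noteq> 0" and aD: "a = vector [a1, a2, 0]"
    and deg: "skew r *v f = 0 \<Longrightarrow> a2 = 0"
  shows "(norm (transpose (Rmat r f) *v a))^2 = a1^2 + a2^2"
proof (cases "skew r *v f = 0")
  case True
  have n: "norm r \<noteq> 0" using assms by simp
  have "transpose (Rmat r f) *v a = a1 *\<^sub>R ((1 / norm r) *\<^sub>R r) + a2 *\<^sub>R 0 + 0 *\<^sub>R 0"
  proof -
    have "Rmat r f = vector [(1 / norm r) *\<^sub>R r, 0, 0]" using True by (simp add: Rmat_def)
    then show ?thesis unfolding aD by (simp only: tmv[where c=0])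
  qed
  also have "\<dots> = (a1 / norm r) *\<^sub>R r" by simp
  finally show ?thesis using n deg[OF True] by (simp add: power_divide)
next
  case False
  define n where "n = norm r"
  define k where "k = norm (skew r *v f)"
  define s where "s = r \<bullet> f"
  have n0: "n > 0" using assms n_def by simp
  have k0: "k > 0" using False k_def by simp
  have rr: "r \<bullet> r = n^2" by (simp add: n_def power2_norm_eq_inner)
  have kk: "k^2 = n^2 * (norm f)^2 - s^2" using skew_norm k_def n_def s_def by simp
  define u where "u = (1 / n) *\<^sub>R r"
  define v where "v = (1 / (n * k)) *\<^sub>R ((r \<bullet> r) *\<^sub>R f - (r \<bullet> f) *\<^sub>R r)"
  have "transpose (Rmat r f) *v a = a1 *\<^sub>R u + a2 *\<^sub>R v + 0 *\<^sub>R ((1 / k) *\<^sub>R (skew r *v f))"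
  proof -
    have "Rmat r f = vector [u, v, (1 / k) *\<^sub>R (skew r *v f)]"
      using False by (simp add: Rmat_def u_def v_def n_def k_def)
    then show ?thesis unfolding aD by (simp only: tmv[where c=0])
  qed
  also have "\<dots> = a1 *\<^sub>R u + a2 *\<^sub>R v" by simp
  finally have eq: "transpose (Rmat r f) *v a = a1 *\<^sub>R u + a2 *\<^sub>R v" .
  have uu: "u \<bullet> u = 1" using n0 rr by (simp add: u_def power2_eq_square)
  have uv: "u \<bullet> v = 0" unfolding u_def v_def rr s_def[symmetric]
    by (simp add: inner_diff_right s_def algebra_simps rr)
  have "v \<bullet> v = (1 / (n*k))^2 * ((n^2)^2 * (f \<bullet> f) - 2 * n^2 * s^2 + s^2 * n^2)"
    unfolding v_def rr s_def[symmetric]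
    by (simp add: inner_diff_right inner_diff_left s_def inner_commute algebra_simps power2_eq_square rr)
  also have "\<dots> = (1 / (n*k))^2 * (n^2 * k^2)" unfolding kk
    by (simp add: power2_norm_eq_inner[symmetric] algebra_simps power2_eq_square)
  also have "\<dots> = 1" using n0 k0 by (simp add: power2_eq_square field_simps)
  finally have vv: "v \<bullet> v = 1" .
  show ?thesis unfolding eq norm2_comb uu uv vv by simp
qed

theorem proposition4:
  fixes eps1 eps2 :: real and r f :: "real^3"
  assumes "eps1 > 0" and "eps2 > 0" and "r \<noteq> 0"
  shows "psi eps1 eps2 r ((1 / (norm r)^4) *\<^sub>R f) > (norm (c1 r f))^2
         \<and> (norm (c1 r f))^2 = (2 - (sgn (r \<bullet> f))^2) * (norm (c2 r f))^2"
proof -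
  define n where "n = norm r"
  define s where "s = r \<bullet> f"
  define P where "P = Phi1 r f"
  have n0: "n > 0" using assms n_def by simp
  have Ps: "\<bar>s\<bar> \<le> P" using Phi1_ge s_def P_def by simp
  have P0: "P \<ge> 0" using Ps by linarith
  have Psq: "P^2 = 2 * n^2 * (norm f)^2 - s^2" using Phi1_sq P_def n_def s_def by simp
  have P2: "Phi2 r f = (2 - (sgn s)^2) * P" by (simp add: Phi2_def s_def P_def)
  have sg: "(s = 0 \<and> sgn s = 0) \<or> (s \<noteq> 0 \<and> (sgn s)^2 = 1)"
    by (cases "s = 0") (auto simp: sgn_real_def)
  have P2s: "Phi2 r f \<ge> \<bar>s\<bar>" using sg P2 Ps P0 by auto
  have deg: "skew r *v f = 0 \<Longrightarrow> P = \<bar>s\<bar>"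
  proof -
    assume "skew r *v f = 0"
    then have "P^2 = s^2" using Psq skew_norm[of r f] n_def s_def by simp
    then have "P^2 = \<bar>s\<bar>^2" by simp
    then show ?thesis using power2_eq_iff_nonneg[OF P0 abs_ge_zero] by blast
  qed
  have degP2: "skew r *v f = 0 \<Longrightarrow> Phi2 r f = \<bar>s\<bar>"
    using deg P2 sg by auto
  have q1: "(sqrt ((\<bar>s\<bar> + P) / n))^2 = (\<bar>s\<bar> + P) / n" using Ps n0 by simp
  have q2: "(sqrt ((- \<bar>s\<bar> + Phi2 r f) / n))^2 = (Phi2 r f - \<bar>s\<bar>) / n" using P2s n0 by simp
  have q3: "(sqrt ((\<bar>s\<bar> + Phi2 r f) / n))^2 = (\<bar>s\<bar> + Phi2 r f) / n" using P2s n0 by simp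
  have q4: "(sqrt ((- \<bar>s\<bar> + P) / n))^2 = (P - \<bar>s\<bar>) / n" using Ps n0 by simp
  have ax2: "(ax r f)^2 = (sgn s)^2 / 4 * ((\<bar>s\<bar> + P) / n)"
    unfolding ax_def s_def[symmetric] P_def[symmetric] n_def[symmetric] power_mult_distrib q1
    by (simp add: power_divide)
  have ay2: "(ay r f)^2 = 1 / 2 * ((Phi2 r f - \<bar>s\<bar>) / n)"
    unfolding ay_def s_def[symmetric] n_def[symmetric] power_mult_distrib q2
    by (simp add: power_divide)
  have bx2: "(bx r f)^2 = 1 / 4 * ((\<bar>s\<bar> + Phi2 r f) / n)"
    unfolding bx_def s_def[symmetric] n_def[symmetric] power_mult_distrib q3
    by (simp add: power_divide)
  have by2: "(by' r f)^2 = (sgn s)^2 / 2 * ((P - \<bar>s\<bar>) / n)"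
    unfolding by'_def s_def[symmetric] P_def[symmetric] n_def[symmetric] power_mult_distrib q4
    by (simp add: power_divide)
  have c1n: "(norm (c1 r f))^2 = (ax r f)^2 + (ay r f)^2"
    unfolding c1_def avec_def
    by (rule norm_T[OF assms(3) refl]) (use degP2 in \<open>simp add: ay_def s_def\<close>)
  have c2n: "(norm (c2 r f))^2 = (bx r f)^2 + (by' r f)^2"
    unfolding c2_def bvec_def
    by (rule norm_T[OF assms(3) refl]) (use deg in \<open>simp add: by'_def P_def s_def\<close>)
  have eqpart: "(norm (c1 r f))^2 = (2 - (sgn s)^2) * (norm (c2 r f))^2"
  proof (cases "s = 0")
    case True
    then have "sgn s = 0" "Phi2 r f = 2 * P" using P2 by auto
    then show ?thesis unfolding c1n c2n ax2 ay2 bx2 by2 using True by (simp add: add_divide_distrib)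
  next
    case False
    then have "(sgn s)^2 = 1" "Phi2 r f = P" using sg P2 by auto
    then show ?thesis unfolding c1n c2n ax2 ay2 bx2 by2 by simp
  qed
  have c1val: "(norm (c1 r f))^2 \<le> P / n - \<bar>s\<bar> / (4 * n)"
  proof (cases "s = 0")
    case True
    then have "sgn s = 0" "Phi2 r f = 2 * P" using P2 by auto
    then show ?thesis unfolding c1n ax2 ay2 using True by simp
  next
    case False
    then have h: "(sgn s)^2 = 1" "Phi2 r f = P" using sg P2 by auto
    have "1 / 4 * ((\<bar>s\<bar> + P) / n) + 1 / 2 * ((P - \<bar>s\<bar>) / n) = (3 * P - \<bar>s\<bar>) / (4 * n)"
      using n0 by (simp add: field_simps)
    also have "\<dots> \<le> P / n - \<bar>s\<bar> / (4 * n)"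
      using n0 P0 by (simp add: field_simps)
    finally show ?thesis unfolding c1n ax2 ay2 h by simp
  qed
  define g where "g = (1 / (norm r)^4) *\<^sub>R f"
  have rg: "r \<bullet> g = s / n^4" by (simp add: g_def s_def n_def)
  have ng: "norm g = norm f / n^4" using n0 by (simp add: g_def n_def)
  have Pg: "n^6 * (Phi1 r g)^2 = P^2 / n^2"
    unfolding Phi1_sq rg ng n_def[symmetric] Psq using n0
    by (simp add: field_simps power2_eq_square) algebra
  define x where "x = s / n"
  have x3: "(norm r)^3 * (r \<bullet> g) = x" unfolding rg n_def[symmetric] x_def using n0
    by (simp add: eval_nat_numeral field_simps)
  have tb: "\<bar>tanh (x / eps1)\<bar> \<le> 1" using tanh_real_bounds[of "x/eps1"] by auto
  have "x * tanh (x / eps1) \<le> \<bar>x\<bar>"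
  proof -
    have "x * tanh (x / eps1) \<le> \<bar>x\<bar> * \<bar>tanh (x / eps1)\<bar>" by (metis abs_ge_self abs_mult)
    also have "\<dots> \<le> \<bar>x\<bar>" using tb by (simp add: mult_left_le)
    finally show ?thesis .
  qed
  moreover have "\<bar>x\<bar> = \<bar>s\<bar> / n" using n0 by (simp add: x_def)
  ultimately have T: "- (x / 4) * tanh (x / eps1) \<ge> - \<bar>s\<bar> / (4 * n)"
    by (simp add: field_simps)
  have "sqrt (P^2 / n^2) < sqrt (P^2 / n^2 + eps2)" using assms(2) by simp
  moreover have "sqrt (P^2 / n^2) = P / n" using P0 n0
    by (simp add: real_sqrt_divide)
  ultimately have S0: "P / n < sqrt (P^2 / n^2 + eps2)" by simp
  have S: "P / n < sqrt ((norm r)^6 * (Phi1 r g)^2 + eps2)"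
    unfolding n_def[symmetric] Pg using S0 .
  have "psi eps1 eps2 r g = - (x / 4) * tanh (x / eps1) + sqrt ((norm r)^6 * (Phi1 r g)^2 + eps2)"
    unfolding psi_def x3 by simp
  then have "psi eps1 eps2 r g > P / n - \<bar>s\<bar> / (4 * n)" using T S by linarith
  then show ?thesis using c1val eqpart g_def s_def by simp
qed

end
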